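(* Consider a heterogeneous graph whose nodes are the rows of $K$ tables $\mathbf{T}^1,\dots,\mathbf{T}^K$ (node type $=$ table), with edges given by primary-key/foreign-key relations, and let $H\ge 1$. Fix a table $k$ and a column $j$ of $\mathbf{T}^k$, and initialize scalar node embeddings by $\mu^{(0)}_v = t^k_{i'j}$ if $v$ is row $i'$ of table $k$, and $\mu^{(0)}_v=0$ if $v$ is a row of any table $k'\neq k$. Fix a length-$H$ meta-path $\rho_H$ that traverses each table at most once, and for $h=0,\dots,H-1$ update $$\mu_v^{(h+1)} = \sigma\Big(w_0^{(h)}\mu_v^{(h)} + \operatorname{agg}\big[\{w^{(h)}\mu_u^{(h)}\}_{u\in\mathcal{N}_v^{(h)}}\big]\Big),$$ where $\mathcal{N}_v^{(h)}$ is the set of neighbors of $v$ along the (single) edge type of step $h$ of $\rho_H$, $\operatorname{agg}$ is a permutation-invariant aggregation function and $\sigma:\mathbb{R}\to\mathbb{R}$ is an activation. If $\sigma$ and $\operatorname{agg}$ are positively homogeneous functions and $w_0^{(h)}, w^{(h)}\in\mathbb{R}_+$ for all $h$, then without loss of generality this update scheme can be reparameterized with no internal weights (i.e., the weights can be pulled out of the composition so that the output embeddings equal a nonnegative overall scale factor times the embeddings produced by the same scheme with all weights $w_0^{(h)}, w^{(h)}$ set to $1$).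
   Context: A meta-path of length $H$ is a sequence of $H$ edge types (PK–FK relations) connecting properly typed nodes. A function $f$ is positively homogeneous if $f(c\,x)=c\,f(x)$ for all $c\ge 0$ (for $\operatorname{agg}$, applied to the multiset of scaled inputs). A node with no neighbors at step $h$ has $\mathcal{N}_v^{(h)}=\emptyset$, in which case the aggregation term is absent. *)

theory Defs
  imports Complex_Main "HOL-Library.Multiset"
begin

text \<open>Heterogeneous relational graph: nodes of type 'v (finite), each node is a row
  (row v) of a table (tbl v). Edge types 'e, each with a source table and a destination
  table; E e u v means that u is a neighbour of v along edge type e (u in table src e,
  v in table dst e).\<close>

definition pos_hom :: "(real \<Rightarrow> real) \<Rightarrow> bool" where
  "pos_hom f \<longleftrightarrow> (\<forall>c x. c \<ge> 0 \<longrightarrow> f (c * x) = c * f x)"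

definition pos_hom_agg :: "(real multiset \<Rightarrow> real) \<Rightarrow> bool" where
  "pos_hom_agg g \<longleftrightarrow> (\<forall>c M. c \<ge> 0 \<longrightarrow> g (image_mset (\<lambda>x. c * x) M) = c * g M)"

definition nbrs :: "('e \<Rightarrow> 'v \<Rightarrow> 'v \<Rightarrow> bool) \<Rightarrow> 'e list \<Rightarrow> nat \<Rightarrow> 'v \<Rightarrow> 'v set" where
  "nbrs E \<rho> h v = {u. E (\<rho> ! h) u v}"

definition path_tbl :: "('e \<Rightarrow> nat) \<Rightarrow> ('e \<Rightarrow> nat) \<Rightarrow> 'e list \<Rightarrow> nat \<Rightarrow> nat" where
  "path_tbl src dst \<rho> h = (if h = 0 then src (\<rho> ! 0) else dst (\<rho> ! (h - 1)))"

text \<open>The aggregation term is absent when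
  the neighbourhood is empty. agg acts on the multiset of scaled neighbour embeddings
  (hence is permutation invariant).\<close>
fun emb :: "(real \<Rightarrow> real) \<Rightarrow> (real multiset \<Rightarrow> real) \<Rightarrow> ('e \<Rightarrow> 'v \<Rightarrow> 'v \<Rightarrow> bool)
    \<Rightarrow> 'e list \<Rightarrow> (nat \<Rightarrow> real) \<Rightarrow> (nat \<Rightarrow> real) \<Rightarrow> ('v \<Rightarrow> real) \<Rightarrow> nat \<Rightarrow> 'v \<Rightarrow> real" where
  "emb \<sigma> agg E \<rho> w0 w \<mu>0 0 = \<mu>0"
| "emb \<sigma> agg E \<rho> w0 w \<mu>0 (Suc h) = (\<lambda>v.
     (if nbrs E \<rho> h v = {}
      then \<sigma> (w0 h * emb \<sigma> agg E \<rho> w0 w \<mu>0 h v)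
      else \<sigma> (w0 h * emb \<sigma> agg E \<rho> w0 w \<mu>0 h v
               + agg (image_mset (\<lambda>u. w h * emb \<sigma> agg E \<rho> w0 w \<mu>0 h u)
                                 (mset_set (nbrs E \<rho> h v))))))"

end

theory Submission
  imports Defs
begin

theorem proposition3p2:
  fixes tbl row :: "'v::finite \<Rightarrow> nat"
    and T :: "nat \<Rightarrow> nat \<Rightarrow> nat \<Rightarrow> real"
    and K k j H :: nat
    and src dst :: "'e \<Rightarrow> nat"
    and E :: "'e \<Rightarrow> 'v \<Rightarrow> 'v \<Rightarrow> bool"
    and \<rho> :: "'e list"
    and \<sigma> :: "real \<Rightarrow> real"
    and agg :: "real multiset \<Rightarrow> real"
    and w0 w :: "nat \<Rightarrow> real"
  assumes nodes_tables: "\<forall>v. tbl v < K"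
    and nodes_rows: "inj (\<lambda>v. (tbl v, row v))"
    and edges_typed: "\<forall>e u v. E e u v \<longrightarrow> tbl u = src e \<and> tbl v = dst e"
    and H_pos: "H \<ge> 1"
    and k_lt: "k < K"
    and path_len: "length \<rho> = H"
    and path_typed: "\<forall>h. h + 1 < H \<longrightarrow> dst (\<rho> ! h) = src (\<rho> ! (h + 1))"
    and path_once: "inj_on (path_tbl src dst \<rho>) {0..H}"
    and sigma_hom: "pos_hom \<sigma>"
    and agg_hom: "pos_hom_agg agg"
    and w0_nonneg: "\<forall>h < H. w0 h \<ge> 0"
    and w_nonneg: "\<forall>h < H. w h \<ge> 0"
  shows "\<forall>t. \<exists>c \<ge> 0. \<forall>v. tbl v = t \<longrightarrow>
           emb \<sigma> agg E \<rho> w0 w (\<lambda>v. if tbl v = k then T k (row v) j else 0) H v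
         = c * emb \<sigma> agg E \<rho> (\<lambda>_. 1) (\<lambda>_. 1) (\<lambda>v. if tbl v = k then T k (row v) j else 0) H v"
proof -
  define \<mu>0 where "\<mu>0 = (\<lambda>v. if tbl v = k then T k (row v) j else 0)"
  define p where "p = path_tbl src dst \<rho>"
  define live where "live h t \<longleftrightarrow> t = k \<or> (\<exists>i. 1 \<le> i \<and> i \<le> h \<and> t = p i \<and> (\<exists>j<i. p j = k))" for h t
  let ?ew = "emb \<sigma> agg E \<rho> w0 w \<mu>0"
  let ?e1 = "emb \<sigma> agg E \<rho> (\<lambda>_. 1) (\<lambda>_. 1) \<mu>0"
  have sigh: "\<sigma> (c * x) = c * \<sigma> x" if "c \<ge> 0" for c x
    using sigma_hom that unfolding pos_hom_def by blast
  have sig0: "\<sigma> 0 = 0" using sigh[of 0 0] by simp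
  have agg_scale: "agg (image_mset (\<lambda>u. c * f u) M) = c * agg (image_mset f M)"
    if "c \<ge> 0" for c and f :: "'v \<Rightarrow> real" and M
  proof -
    have "image_mset (\<lambda>u. c * f u) M = image_mset (\<lambda>x. c * x) (image_mset f M)"
      by (simp add: multiset.map_comp o_def)
    then show ?thesis using agg_hom that unfolding pos_hom_agg_def by simp
  qed
  have agg0: "agg (image_mset f M) = 0" if "\<forall>u\<in>#M. f u = 0" for f :: "'v \<Rightarrow> real" and M
  proof -
    have "image_mset f M = image_mset (\<lambda>u. 0 * f u) M"
      using that by (intro image_mset_cong) simp
    then show ?thesis using agg_scale[of 0 f M] by simp
  qed
  have nb: "tbl u = src (\<rho> ! h) \<and> tbl v = dst (\<rho> ! h)" if "u \<in> nbrs E \<rho> h v" for u v h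
    using that edges_typed unfolding nbrs_def by blast
  have pd: "dst (\<rho> ! h) = p (Suc h)" for h unfolding p_def path_tbl_def by simp
  have ps: "src (\<rho> ! h) = p h" if "h < H" for h
  proof (cases h)
    case 0 then show ?thesis unfolding p_def path_tbl_def by simp
  next
    case (Suc m) then show ?thesis using path_typed that unfolding p_def path_tbl_def by auto
  qed
  have step: "(\<forall>t. \<exists>c\<ge>0. \<forall>v. tbl v = t \<longrightarrow> ?ew h v = c * ?e1 h v) \<and>
              (\<forall>v. \<not> live h (tbl v) \<longrightarrow> ?e1 h v = 0)" if "h \<le> H" for h
    using that
  proof (induction h)
    case 0
    show ?case
    proof (intro conjI allI impI)
      fix t show "\<exists>c\<ge>0. \<forall>v. tbl v = t \<longrightarrow> ?ew 0 v = c * ?e1 0 v"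
        by (intro exI[of _ 1]) simp
    next
      fix v assume "\<not> live 0 (tbl v)"
      then show "?e1 0 v = 0" unfolding live_def \<mu>0_def by simp
    qed
  next
    case (Suc h)
    then have hH: "h < H" by simp
    from Suc have IH1: "\<forall>t. \<exists>c\<ge>0. \<forall>v. tbl v = t \<longrightarrow> ?ew h v = c * ?e1 h v"
      and IH2: "\<forall>v. \<not> live h (tbl v) \<longrightarrow> ?e1 h v = 0" by auto
    have w0h: "w0 h \<ge> 0" and wh: "w h \<ge> 0" using hH w0_nonneg w_nonneg by auto
    define s where "s = p h"
    define d where "d = p (Suc h)"
    have nbt: "tbl u = s \<and> tbl v = d" if "u \<in> nbrs E \<rho> h v" for u v
      using nb[OF that] ps[OF hH] pd s_def d_def by simp
    have fin: "finite (nbrs E \<rho> h v)" for v by simp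
    have liveSuc: "live h t" if "live (Suc h) t" "t \<noteq> d" for t
      using that unfolding live_def d_def by (auto simp: le_Suc_eq)
    have pinj: "p a = p b \<Longrightarrow> a \<le> H \<Longrightarrow> b \<le> H \<Longrightarrow> a = b" for a b
      using path_once unfolding p_def inj_on_def by auto
    have notboth: "\<not> (live h d \<and> live h s)"
    proof
      assume A: "live h d \<and> live h s"
      have dk: "d = k"
      proof (rule ccontr)
        assume "d \<noteq> k"
        then obtain i where "1 \<le> i" "i \<le> h" "d = p i" using A unfolding live_def by auto
        then show False using pinj[of "Suc h" i] hH d_def by auto
      qed
      show False
      proof (cases "s = k")
        case True then show False using dk pinj[of h "Suc h"] hH s_def d_def by auto
      next
        case False
        then obtain i j' where "1 \<le> i" "i \<le> h" "s = p i" "j' < i" "p j' = k" using A unfolding live_def by auto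
        then show False using dk pinj[of j' "Suc h"] hH d_def by auto
      qed
    qed
    show ?case
    proof (intro conjI allI impI)
      fix v assume nl: "\<not> live (Suc h) (tbl v)"
      have z: "?e1 h v = 0" using IH2 nl unfolding live_def by auto
      show "?e1 (Suc h) v = 0"
      proof (cases "nbrs E \<rho> h v = {}")
        case True then show ?thesis using z sig0 by simp
      next
        case False
        then obtain u0 where u0: "u0 \<in> nbrs E \<rho> h v" by blast
        have tv: "tbl v = d" using nbt[OF u0] by simp
        have "\<not> live h s"
        proof
          assume "live h s"
          then have "\<exists>j'<Suc h. p j' = k"
          proof (unfold live_def s_def, elim disjE exE conjE)
            assume "p h = k" then show ?thesis by (intro exI[of _ h]) simp
          next
            fix i j' assume "i \<le> h" "j' < i" "p j' = k"
            then show ?thesis by (intro exI[of _ j']) simp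
          qed
          then have "live (Suc h) d" unfolding live_def d_def by auto
          then show False using nl tv by simp
        qed
        then have "\<forall>u\<in>#mset_set (nbrs E \<rho> h v). 1 * ?e1 h u = 0"
          using IH2 nbt by auto
        then have "agg (image_mset (\<lambda>u. 1 * ?e1 h u) (mset_set (nbrs E \<rho> h v))) = 0"
          by (rule agg0)
        then show ?thesis using False z sig0 by simp
      qed
    next
      fix t
      obtain ct where ct: "ct \<ge> 0" "\<forall>v. tbl v = t \<longrightarrow> ?ew h v = ct * ?e1 h v" using IH1 by blast
      show "\<exists>c\<ge>0. \<forall>v. tbl v = t \<longrightarrow> ?ew (Suc h) v = c * ?e1 (Suc h) v"
      proof (cases "t = d")
        case False
        show ?thesis
        proof (intro exI[of _ "w0 h * ct"] conjI allI impI)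
          show "0 \<le> w0 h * ct" using w0h ct by simp
        next
          fix v assume tv: "tbl v = t"
          have e: "nbrs E \<rho> h v = {}" using nbt tv False by blast
          have "\<sigma> (w0 h * ?ew h v) = (w0 h * ct) * \<sigma> (1 * ?e1 h v)"
            using ct tv sigh[of "w0 h * ct" "?e1 h v"] w0h by (simp add: mult.assoc)
          then show "?ew (Suc h) v = w0 h * ct * ?e1 (Suc h) v" using e by simp
        qed
      next
        case True
        obtain cs where cs: "cs \<ge> 0" "\<forall>v. tbl v = s \<longrightarrow> ?ew h v = cs * ?e1 h v" using IH1 by blast
        have aggw: "agg (image_mset (\<lambda>u. w h * ?ew h u) (mset_set (nbrs E \<rho> h v)))
              = (w h * cs) * agg (image_mset (\<lambda>u. 1 * ?e1 h u) (mset_set (nbrs E \<rho> h v)))" for v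
        proof -
          have "image_mset (\<lambda>u. w h * ?ew h u) (mset_set (nbrs E \<rho> h v))
             = image_mset (\<lambda>u. (w h * cs) * (1 * ?e1 h u)) (mset_set (nbrs E \<rho> h v))"
            using cs nbt by (intro image_mset_cong) (simp add: mult.assoc)
          then show ?thesis using agg_scale[of "w h * cs"] wh cs by simp
        qed
        show ?thesis
        proof (cases "live h d")
          case False
          show ?thesis
          proof (intro exI[of _ "w h * cs"] conjI allI impI)
            show "0 \<le> w h * cs" using wh cs by simp
          next
            fix v assume tv: "tbl v = t"
            have z1: "?e1 h v = 0" using IH2 False tv True by simp
            have zw: "?ew h v = 0" using ct tv z1 by simp
            show "?ew (Suc h) v = w h * cs * ?e1 (Suc h) v"
              using z1 zw sig0 aggw[of v] sigh[of "w h * cs"] wh cs by simp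
          qed
        next
          case dl: True
          then have sl: "\<not> live h s" using notboth by blast
          show ?thesis
          proof (intro exI[of _ "w0 h * ct"] conjI allI impI)
            show "0 \<le> w0 h * ct" using w0h ct by simp
          next
            fix v assume tv: "tbl v = t"
            have "\<forall>u\<in>#mset_set (nbrs E \<rho> h v). 1 * ?e1 h u = 0"
              using IH2 nbt sl by auto
            then have a1: "agg (image_mset (\<lambda>u. 1 * ?e1 h u) (mset_set (nbrs E \<rho> h v))) = 0"
              by (rule agg0)
            have "\<sigma> (w0 h * ?ew h v) = (w0 h * ct) * \<sigma> (1 * ?e1 h v)"
              using ct tv sigh[of "w0 h * ct" "?e1 h v"] w0h by (simp add: mult.assoc)
            then show "?ew (Suc h) v = w0 h * ct * ?e1 (Suc h) v"
              using aggw[of v] a1 by simp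
          qed
        qed
      qed
    qed
  qed
  show ?thesis using step[of H] unfolding \<mu>0_def by simp
qed

end
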